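(* Let $E/\mathbb{Q}$ be given by the model $y^2=x^3+Ax+B$ ($A,B\in\mathbb{Z}$) described in the context and $X=\max\{|A|^3,|B|^2\}$. Let $P,Q\in E(\mathbb{Q})$ satisfy $X^{1/6}\le x(P)<x(Q)$ and $x(P)=x_1/s$, $x(Q)=x_2/s$ with $x_1,x_2\in\mathbb{Z}$, $s$ a positive integer, and $\gcd(x_1,s)=\gcd(x_2,s)=1$. Then $h(P+Q)\le h(P)+2h(Q)+2.9$.
   Context: The model is obtained from a global minimal Weierstrass equation of $E$ by the substitution $x\mapsto \frac{1}{36}(x-3b_2)$, $y\mapsto \frac12(\frac{y}{108}-\frac{a_1}{36}(x-3b_2)-a_3)$. $h$ is the absolute logarithmic Weil height and $h(P)=h(x(P))$. *)

theory Defs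
  imports "HOL-Analysis.Analysis"
begin

text \<open>A long Weierstrass model  y^2 + a1 x y + a3 y = x^3 + a2 x^2 + a4 x + a6.\<close>
datatype weier = W rat rat rat rat rat

fun w_b2 :: "weier \<Rightarrow> rat" where "w_b2 (W a1 a2 a3 a4 a6) = a1^2 + 4*a2"
fun w_b4 :: "weier \<Rightarrow> rat" where "w_b4 (W a1 a2 a3 a4 a6) = 2*a4 + a1*a3"
fun w_b6 :: "weier \<Rightarrow> rat" where "w_b6 (W a1 a2 a3 a4 a6) = a3^2 + 4*a6"
fun w_b8 :: "weier \<Rightarrow> rat" where
  "w_b8 (W a1 a2 a3 a4 a6) = a1^2*a6 + 4*a2*a6 - a1*a3*a4 + a2*a3^2 - a4^2"

definition w_c4 :: "weier \<Rightarrow> rat" where "w_c4 E = (w_b2 E)^2 - 24 * w_b4 E"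
definition w_c6 :: "weier \<Rightarrow> rat" where
  "w_c6 E = 36 * w_b2 E * w_b4 E - 216 * w_b6 E - (w_b2 E)^3"
definition w_disc :: "weier \<Rightarrow> rat" where
  "w_disc E = 9 * w_b2 E * w_b4 E * w_b6 E - (w_b2 E)^2 * w_b8 E
              - 8 * (w_b4 E)^3 - 27 * (w_b6 E)^2"

fun w_integral :: "weier \<Rightarrow> bool" where
  "w_integral (W a1 a2 a3 a4 a6) \<longleftrightarrow> a1 \<in> \<int> \<and> a2 \<in> \<int> \<and> a3 \<in> \<int> \<and> a4 \<in> \<int> \<and> a6 \<in> \<int>"

text \<open>Standard change of variables  x = u^2 x' + r,  y = u^3 y' + s u^2 x' + t  (Silverman III.1).\<close>
fun w_change :: "rat \<Rightarrow> rat \<Rightarrow> rat \<Rightarrow> rat \<Rightarrow> weier \<Rightarrow> weier" where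
  "w_change uu rr ss tt (W a1 a2 a3 a4 a6) =
     W ((a1 + 2* ss) / uu)
       ((a2 - ss*a1 + 3* rr - ss^2) / uu^2)
       ((a3 + rr*a1 + 2* tt) / uu^3)
       ((a4 - ss*a3 + 2* rr*a2 - (tt + rr* ss)*a1 + 3* rr^2 - 2* ss* tt) / uu^4)
       ((a6 + rr*a4 + rr^2*a2 + rr^3 - tt*a3 - tt^2 - rr* tt*a1) / uu^6)"

definition global_minimal :: "weier \<Rightarrow> bool" where
  "global_minimal E \<longleftrightarrow> w_integral E \<and> w_disc E \<noteq> 0 \<and>
     (\<forall>u r s t. u \<noteq> 0 \<longrightarrow> w_integral (w_change u r s t E) \<longrightarrow>
        \<bar>w_disc E\<bar> \<le> \<bar>w_disc (w_change u r s t E)\<bar>)"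

datatype ec_point = Infty | Pt rat rat

fun on_curve :: "rat \<Rightarrow> rat \<Rightarrow> ec_point \<Rightarrow> bool" where
  "on_curve A B Infty = True"
| "on_curve A B (Pt x y) \<longleftrightarrow> y^2 = x^3 + A*x + B"

fun ec_add :: "rat \<Rightarrow> rat \<Rightarrow> ec_point \<Rightarrow> ec_point \<Rightarrow> ec_point" where
  "ec_add A B Infty P = P"
| "ec_add A B P Infty = P"
| "ec_add A B (Pt x1 y1) (Pt x2 y2) =
     (if x1 = x2 \<and> y1 = - y2 then Infty
      else let l = (if x1 = x2 then (3*x1^2 + A) / (2*y1) else (y2 - y1) / (x2 - x1));
               x3 = l^2 - x1 - x2
           in Pt x3 (l*(x1 - x3) - y1))"

definition rat_height :: "rat \<Rightarrow> real" where
  "rat_height r = (case quotient_of r of (p, q) \<Rightarrow> ln (real_of_int (max \<bar>p\<bar> q)))"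

fun pt_height :: "ec_point \<Rightarrow> real" where
  "pt_height Infty = 0"
| "pt_height (Pt x y) = rat_height x"

end

theory Submission
  imports Defs
begin

lemma rat_height_le:
  fixes r :: rat and N D M :: int
  assumes "r * of_int D = of_int N" "D > 0" "\<bar>N\<bar> \<le> M" "D \<le> M"
  shows "rat_height r \<le> ln (real_of_int M)"
proof -
  obtain p q where pq: "quotient_of r = (p, q)" by (cases "quotient_of r")
  have q0: "q > 0" using quotient_of_denom_pos[OF pq] .
  have cop: "coprime p q" using quotient_of_coprime[OF pq] .
  have r: "r = of_int p / of_int q" using quotient_of_div[OF pq] .
  have e: "p * D = N * q"
  proof -
    have "of_int p / of_int q * of_int D = (of_int N :: rat)" using assms(1) r by simp
    then have "of_int p * of_int D = (of_int N * of_int q :: rat)" using q0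
      by (simp add: field_simps)
    then show ?thesis by (metis of_int_eq_iff of_int_mult)
  qed
  have "q dvd p * D" using e by simp
  then have "q dvd D" using cop by (metis coprime_commute coprime_dvd_mult_right_iff mult.commute)
  then obtain k where k: "D = q * k" by (auto elim: dvdE)
  have kpos: "k > 0" using k q0 assms(2) by (simp add: zero_less_mult_iff)
  have "N = p * k" using e k q0 by (simp add: algebra_simps)
  then have "\<bar>p\<bar> \<le> \<bar>N\<bar>" using kpos by (simp add: abs_mult mult_le_cancel_left1)
  moreover have "q \<le> D" using k kpos q0 by (simp add: mult_le_cancel_left1)
  ultimately have "max \<bar>p\<bar> q \<le> M" using assms by simp
  moreover have "max \<bar>p\<bar> q \<ge> 1" using q0 by simp
  ultimately have "ln (real_of_int (max \<bar>p\<bar> q)) \<le> ln (real_of_int M)"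
    by (subst ln_le_cancel_iff) auto
  then show ?thesis unfolding rat_height_def pq by simp
qed

lemma rat_height_frac:
  fixes a s :: int
  assumes "s > 0" "coprime a s"
  shows "rat_height (of_int a / of_int s) = ln (real_of_int (max \<bar>a\<bar> s))"
proof -
  have "quotient_of (of_int a / of_int s) = (a, s)"
    using assms by (simp add: Fract_of_int_quotient[symmetric] quotient_of_Fract)
  then show ?thesis unfolding rat_height_def by simp
qed

lemma rat_sq_int:
  fixes z :: rat and n :: int
  assumes "z^2 = of_int n"
  shows "z \<in> \<int>"
proof -
  obtain p q where pq: "quotient_of z = (p, q)" by (cases "quotient_of z")
  have q0: "q > 0" using quotient_of_denom_pos[OF pq] .
  have cop: "coprime p q" using quotient_of_coprime[OF pq] .
  have r: "z = of_int p / of_int q" using quotient_of_div[OF pq] .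
  have "(of_int p)^2 = (of_int n * (of_int q)^2 :: rat)"
    using assms r q0 by (simp add: field_simps power_divide)
  then have e: "p^2 = n * q^2" by (metis of_int_eq_iff of_int_mult of_int_power)
  have "q^2 dvd p^2" using e by simp
  moreover have "coprime (q^2) (p^2)" using cop by (simp add: coprime_commute)
  ultimately have "is_unit (q^2)" by (meson coprime_common_divisor dvd_refl)
  moreover have "q dvd q^2" by (simp add: power2_eq_square)
  ultimately have "q dvd 1" using dvd_trans by blast
  then have "q \<le> 1" by (rule zdvd_imp_le) simp
  then have "q = 1" using q0 by simp
  then show ?thesis using r by simp
qed


lemma disc_rel: "1728 * w_disc E = (w_c4 E)^3 - (w_c6 E)^2"
proof (cases E)
  case (W a1 a2 a3 a4 a6)
  show ?thesis unfolding W w_disc_def w_c4_def w_c6_def w_b2.simps w_b4.simps w_b6.simps w_b8.simps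
    by algebra
qed

lemma ln12: "ln (12::real) \<le> 2.9"
proof -
  have "1 + 1.45 + (1.45::real)^2/2 \<le> exp 1.45" by (rule exp_lower_Taylor_quadratic) simp
  then have "(1 + 1.45 + (1.45::real)^2/2)^2 \<le> (exp 1.45)^2" by (rule power_mono) simp
  also have "(exp (1.45::real))^2 = exp 2.9" by (simp add: exp_double[symmetric])
  finally have h: "(1 + 1.45 + (1.45::real)^2/2)^2 \<le> exp 2.9" .
  have "(12::real) \<le> (1 + 1.45 + (1.45::real)^2/2)^2" by (simp add: power2_eq_square)
  with h have "12 \<le> exp (2.9::real)" by linarith
  then have "ln 12 \<le> ln (exp (2.9::real))" by (subst ln_le_cancel_iff) auto
  then show ?thesis by simp
qed

theorem corollary3p3:
  fixes Emin :: weier and A B x1 x2 s :: int and yP yQ :: rat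
  assumes "global_minimal Emin"
    and "of_int A = - 27 * w_c4 Emin" and "of_int B = - 54 * w_c6 Emin"
    and "on_curve (of_int A) (of_int B) (Pt (of_int x1 / of_int s) yP)"
    and "on_curve (of_int A) (of_int B) (Pt (of_int x2 / of_int s) yQ)"
    and "s > 0" and "gcd x1 s = 1" and "gcd x2 s = 1"
    and "root 6 (real_of_int (max (\<bar>A\<bar>^3) (B^2))) \<le> real_of_int x1 / real_of_int s"
    and "x1 < x2"
  shows "pt_height (ec_add (of_int A) (of_int B) (Pt (of_int x1 / of_int s) yP)
                                                   (Pt (of_int x2 / of_int s) yQ))
         \<le> pt_height (Pt (of_int x1 / of_int s) yP) + 2 * pt_height (Pt (of_int x2 / of_int s) yQ) + 2.9"
proof -
  let ?xP = "(of_int x1 / of_int s :: rat)" and ?xQ = "(of_int x2 / of_int s :: rat)"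
  have sr: "(of_int s :: rat) \<noteq> 0" using assms(6) by simp
  have "w_disc Emin \<noteq> 0" using assms(1) unfolding global_minimal_def by simp
  then have "\<not> (w_c4 Emin = 0 \<and> w_c6 Emin = 0)" using disc_rel[of Emin] by auto
  then have AB: "A \<noteq> 0 \<or> B \<noteq> 0" using assms(2,3) by auto
  define X where "X = max (\<bar>A\<bar>^3) (B^2)"
  have X1: "X \<ge> 1"
  proof (cases "A = 0")
    case True
    then have "\<bar>B\<bar> \<ge> 1" using AB by simp
    then have "\<bar>B\<bar>^2 \<ge> 1" by (rule one_le_power)
    then show ?thesis unfolding X_def by simp
  next
    case False
    then have "\<bar>A\<bar> \<ge> 1" by simp
    then have "\<bar>A\<bar>^3 \<ge> 1" by (rule one_le_power)
    then show ?thesis unfolding X_def by simp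
  qed
  have r1: "root 6 (real_of_int X) \<ge> 1" using X1 by simp
  have t1: "real_of_int x1 / real_of_int s \<ge> 1" using r1 assms(9) unfolding X_def by linarith
  have s1: "s \<ge> 1" using assms(6) by simp
  have x1s: "x1 \<ge> s" using t1 assms(6) by (simp add: divide_simps split: if_splits)
  have x1p: "x1 > 0" using x1s s1 by simp
  have "real_of_int X = (root 6 (real_of_int X))^6" using X1 by simp
  also have "\<dots> \<le> (real_of_int x1 / real_of_int s)^6"
    by (rule power_mono) (use assms(9) X1 in \<open>auto simp: X_def\<close>)
  finally have "real_of_int X * (real_of_int s)^6 \<le> (real_of_int x1)^6"
    using assms(6) by (simp add: divide_simps power_divide)
  then have Xs: "X * s^6 \<le> x1^6" by (metis of_int_le_iff of_int_mult of_int_power)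
  have "(\<bar>A\<bar> * s^2)^3 \<le> (x1^2)^3"
  proof -
    have "\<bar>A\<bar>^3 * s^6 \<le> X * s^6" unfolding X_def by (rule mult_right_mono) auto
    then show ?thesis using Xs by (simp add: power_mult_distrib power_mult[symmetric])
  qed
  then have hA: "\<bar>A\<bar> * s^2 \<le> x1^2" by (subst (asm) power_mono_iff) auto
  have "(\<bar>B\<bar> * s^3)^2 \<le> (x1^3)^2"
  proof -
    have "B^2 * s^6 \<le> X * s^6" unfolding X_def by (rule mult_right_mono) auto
    then show ?thesis using Xs by (simp add: power_mult_distrib power_mult[symmetric])
  qed
  then have hB: "\<bar>B\<bar> * s^3 \<le> x1^3" using x1p s1 by (subst (asm) power_mono_iff) auto
  define n1 where "n1 = x1^3 + A * x1 * s^2 + B * s^3"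
  define n2 where "n2 = x2^3 + A * x2 * s^2 + B * s^3"
  have eP: "yP^2 = ?xP^3 + of_int A * ?xP + of_int B" using assms(4) by simp
  have eQ: "yQ^2 = ?xQ^3 + of_int A * ?xQ + of_int B" using assms(5) by simp
  have n1e: "of_int s^3 * yP^2 = of_int n1" unfolding eP n1_def using sr
    by (simp add: field_simps power3_eq_cube power2_eq_square)
  have n2e: "of_int s^3 * yQ^2 = of_int n2" unfolding eQ n2_def using sr
    by (simp add: field_simps power3_eq_cube power2_eq_square)
  have n1nn: "n1 \<ge> 0"
  proof -
    have "(of_int n1 :: rat) \<ge> 0" unfolding n1e[symmetric] using assms(6) by simp
    then show ?thesis by simp
  qed
  have x2p: "x2 > 0" using x1p assms(10) by simp
  have x12sq: "x1^2 \<le> x2^2" using x1p assms(10) by (intro power_mono) simp_all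
  have x12cb: "x1^3 \<le> x2^3" using x1p assms(10) by (intro power_mono) simp_all
  have a1: "\<bar>A * x1 * s^2\<bar> \<le> x1^3"
  proof -
    have "\<bar>A * x1 * s^2\<bar> = x1 * (\<bar>A\<bar> * s^2)" using x1p by (simp add: abs_mult)
    also have "\<dots> \<le> x1 * x1^2" using hA x1p by (intro mult_left_mono) simp_all
    also have "x1 * x1^2 = x1^3" by (simp add: power3_eq_cube power2_eq_square)
    finally show ?thesis .
  qed
  have a2: "\<bar>A * x2 * s^2\<bar> \<le> x2^3"
  proof -
    have hA2: "\<bar>A\<bar> * s^2 \<le> x2^2" using hA x12sq by linarith
    have "\<bar>A * x2 * s^2\<bar> = x2 * (\<bar>A\<bar> * s^2)" using x2p by (simp add: abs_mult)
    also have "\<dots> \<le> x2 * x2^2" using hA2 x2p by (intro mult_left_mono) simp_all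
    also have "x2 * x2^2 = x2^3" by (simp add: power3_eq_cube power2_eq_square)
    finally show ?thesis .
  qed
  have b2: "\<bar>B\<bar> * s^3 \<le> x2^3" using hB x12cb by linarith
  have abs_Bs: "\<bar>B * s^3\<bar> = \<bar>B\<bar> * s^3" using s1 by (simp add: abs_mult)
  have n1b: "n1 \<le> 3 * x1^3" using a1 hB abs_Bs unfolding n1_def by linarith
  have n2b: "n2 \<le> 3 * x2^3" using a2 b2 abs_Bs unfolding n2_def by linarith
  have n2nn: "n2 \<ge> 0"
  proof -
    have "(of_int n2 :: rat) \<ge> 0" unfolding n2e[symmetric] using assms(6) by simp
    then show ?thesis by simp
  qed
  define z where "z = of_int s^3 * yP * yQ"
  have "z^2 = (of_int s^3 * yP^2) * (of_int s^3 * yQ^2)" unfolding z_def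
    by (simp add: power_mult_distrib power2_eq_square power3_eq_cube ac_simps)
  then have z2: "z^2 = of_int (n1 * n2)" using n1e n2e by simp
  obtain zi where zi: "z = of_int zi" using rat_sq_int[OF z2] by (auto elim: Ints_cases)
  have zi2: "zi^2 = n1 * n2" using z2 zi by (metis of_int_eq_iff of_int_power)
  have c1: "0 \<le> 3 * x1^3" using x1p by simp
  have c2: "0 \<le> n2" by (rule n2nn)
  have "n1 * n2 \<le> (3 * x1^3) * (3 * x2^3)" using n1b n2b c1 c2 by (rule mult_mono)
  also have "(3 * x1^3) * (3 * x2^3) = 9 * ((x1^2 * x2^3) * x1)"
    by (simp add: power3_eq_cube power2_eq_square ac_simps)
  also have "(x1^2 * x2^3) * x1 \<le> (x1^2 * x2^3) * x2"
    using assms(10) x1p x2p by (intro mult_left_mono) simp_all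
  also have "9 * ((x1^2 * x2^3) * x2) = (3 * x1 * x2^2)^2"
    by (simp add: power3_eq_cube power2_eq_square ac_simps)
  finally have "\<bar>zi\<bar>^2 \<le> (3 * x1 * x2^2)^2" using zi2 by simp
  moreover have "0 \<le> 3 * x1 * x2^2" using x1p by simp
  ultimately have zib: "\<bar>zi\<bar> \<le> 3 * x1 * x2^2" by (rule power2_le_imp_le)
  define N where "N = (x1 * x2 + A * s^2) * (x1 + x2) + 2 * B * s^3 - 2 * zi"
  define D where "D = s * (x2 - x1)^2"
  have D0: "D > 0" using assms(6,10) unfolding D_def by simp
  define l where "l = (yQ - yP) / (?xQ - ?xP)"
  have neq: "?xP \<noteq> ?xQ" using assms(10) sr by (simp add: divide_simps)
  have add: "ec_add (of_int A) (of_int B) (Pt ?xP yP) (Pt ?xQ yQ)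
      = Pt (l^2 - ?xP - ?xQ) (l * (?xP - (l^2 - ?xP - ?xQ)) - yP)"
    using neq by (simp add: l_def Let_def)
  have dif: "?xQ - ?xP = (of_int x2 - of_int x1) / of_int s" by (simp add: diff_divide_distrib)
  have dnz: "(of_int x2 - of_int x1 :: rat) \<noteq> 0" using assms(10) by simp
  have l': "l = (yQ - yP) * of_int s / (of_int x2 - of_int x1)" unfolding l_def dif using sr
    by simp
  have "l^2 * of_int D = ((yQ - yP) * of_int s)^2 / (of_int x2 - of_int x1)^2
      * (of_int s * (of_int x2 - of_int x1)^2)"
    unfolding l' D_def by (simp add: power_divide)
  also have "\<dots> = ((yQ - yP) * of_int s)^2 * of_int s" using dnz by simp
  also have "\<dots> = of_int s^3 * (yQ^2 - 2 * yP * yQ + yP^2)"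
    by (simp add: power2_eq_square power3_eq_cube algebra_simps)
  finally have ll: "l^2 * of_int D = of_int s^3 * (yQ^2 - 2 * yP * yQ + yP^2)" .
  have key: "(l^2 - ?xP - ?xQ) * of_int D = of_int N"
  proof -
    have "(l^2 - ?xP - ?xQ) * of_int D = l^2 * of_int D - (?xP + ?xQ) * of_int D"
      by (simp add: algebra_simps)
    also have "\<dots> = of_int s^3 * (yQ^2 - 2 * yP * yQ + yP^2) - (?xP + ?xQ) * of_int D"
      using ll by simp
    also have "of_int s^3 * (yQ^2 - 2 * yP * yQ + yP^2) = of_int s^3 * yQ^2 - 2 * z + of_int s^3 * yP^2"
      unfolding z_def by (simp add: algebra_simps)
    also have "(?xP + ?xQ) * of_int D = (of_int x1 + of_int x2) * (of_int x2 - of_int x1)^2"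
      unfolding D_def using sr by (simp add: field_simps)
    also have "of_int s^3 * yQ^2 - 2 * z + of_int s^3 * yP^2
        - (of_int x1 + of_int x2) * (of_int x2 - of_int x1)^2
      = of_int n2 - 2 * z + of_int n1 - (of_int x1 + of_int x2) * (of_int x2 - of_int x1)^2"
      using n1e n2e by simp
    also have "\<dots> = of_int N" unfolding N_def n1_def n2_def zi
      by (simp add: algebra_simps power2_eq_square power3_eq_cube)
    finally show ?thesis .
  qed
  define W where "W = x1 * x2^2"
  have x1W: "x1 * x1 \<le> x1 * x2" using x1p assms(10) by (intro mult_left_mono) auto
  have x12W: "x1 * x2 \<le> x2 * x2" using x2p assms(10) by (intro mult_right_mono) auto
  have t1b: "\<bar>(x1 * x2 + A * s^2) * (x1 + x2)\<bar> \<le> 4 * W"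
  proof -
    have "\<bar>A * s^2\<bar> = \<bar>A\<bar> * s^2" by (simp add: abs_mult)
    also have "\<dots> \<le> x1 * x2" using hA x1W by (simp add: power2_eq_square)
    finally have "\<bar>A * s^2\<bar> \<le> x1 * x2" .
    then have "\<bar>x1 * x2 + A * s^2\<bar> \<le> 2 * x1 * x2" using x1p x2p by (simp add: abs_le_iff)
    moreover have "\<bar>x1 + x2\<bar> \<le> 2 * x2" using x1p assms(10) by simp
    ultimately have "\<bar>x1 * x2 + A * s^2\<bar> * \<bar>x1 + x2\<bar> \<le> (2 * x1 * x2) * (2 * x2)"
      by (rule mult_mono) (use x1p x2p in auto)
    then have "\<bar>(x1 * x2 + A * s^2) * (x1 + x2)\<bar> \<le> (2 * x1 * x2) * (2 * x2)"
      by (simp only: abs_mult)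
    also have "(2 * x1 * x2) * (2 * x2) = 4 * W" unfolding W_def by (simp add: power2_eq_square)
    finally show ?thesis .
  qed
  have t2b: "\<bar>B * s^3\<bar> \<le> W"
  proof -
    have "x1 * x1 \<le> x2 * x2" using x1W x12W by linarith
    then have "x1 * (x1 * x1) \<le> x1 * (x2 * x2)" using x1p by (intro mult_left_mono) simp_all
    moreover have "x1^3 = x1 * (x1 * x1)" by (simp add: power3_eq_cube)
    moreover have "W = x1 * (x2 * x2)" unfolding W_def by (simp add: power2_eq_square)
    ultimately have "x1^3 \<le> W" by linarith
    then show ?thesis using hB abs_Bs by linarith
  qed
  have zib': "\<bar>zi\<bar> \<le> 3 * W" using zib unfolding W_def by (simp only: mult.assoc)
  have Nsplit: "N = (x1 * x2 + A * s^2) * (x1 + x2) + 2 * (B * s^3) - 2 * zi"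
    unfolding N_def by simp
  define M where "M = 12 * W"
  have Nb: "\<bar>N\<bar> \<le> M" unfolding Nsplit M_def using t1b t2b zib'
    by (simp only: abs_le_iff) linarith
  have Db: "D \<le> M"
  proof -
    have "(x2 - x1)^2 \<le> x2^2" using x1p assms(10) by (intro power_mono) simp_all
    then have "s * (x2 - x1)^2 \<le> x1 * x2^2" using x1s s1 by (intro mult_mono) simp_all
    then have "D \<le> W" unfolding D_def W_def .
    moreover have "W \<ge> 0" unfolding W_def using x1p by simp
    ultimately show ?thesis unfolding M_def by linarith
  qed
  have hsum: "rat_height (l^2 - ?xP - ?xQ) \<le> ln (real_of_int M)"
    by (rule rat_height_le[OF key D0 Nb Db])
  have lnM: "ln (real_of_int M) = ln 12 + ln (real_of_int x1) + 2 * ln (real_of_int x2)"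
    unfolding M_def W_def using x1p x2p by (simp add: ln_mult ln_realpow)
  have hP: "pt_height (Pt ?xP yP) = ln (real_of_int x1)"
    using rat_height_frac[of s x1] assms(6,7) x1s x1p by (simp add: coprime_iff_gcd_eq_1 max_def)
  have hQ: "pt_height (Pt ?xQ yQ) = ln (real_of_int x2)"
    using rat_height_frac[of s x2] assms(6,8) x1s assms(10) by (simp add: coprime_iff_gcd_eq_1 max_def)
  show ?thesis unfolding add using hsum lnM ln12 hP hQ by (simp only: pt_height.simps)
qed

end
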